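(* Let $n\geq1$ and let $e\in\mathbf{I}_n(\geq,\geq,-)$ have parameters $(p,q)$. Then there are exactly $p+q$ sequences $f\in\mathbf{I}_{n+1}(\geq,\geq,-)$ whose first $n$ entries form $e$; these are $f=(e_1,\ldots,e_n,b)$ with $\beta(e)<b\leq n$, and, as $b$ runs from $\beta(e)+1$ to $n$, their parameters are respectively $$(p-1,q+1),(p-2,q+1),\ldots,(0,q+1),\ (p+1,q),(p+2,q-1),\ldots,(p+q,1).$$
   Context: $\mathbf{I}_n$ is the set of inversion sequences $e=(e_1,\ldots,e_n)$ with $0\leq e_i<i$. $\mathbf{I}_n(\geq,\geq,-)$ is the set of $e\in\mathbf{I}_n$ with no indices $i<j<k$ such that $e_i\geq e_j\geq e_k$. An entry $e_i$ is a left-to-right maximum if $e_i>e_j$ for all $j<i$. Let $\alpha(e)=\max\{e_1,\ldots,e_n\}$ and let $\beta(e)$ be the largest element of $\{e_i: e_i \text{ is not a left-to-right maximum}\}\cup\{-1\}$. The parameters of $e\in\mathbf{I}_n(\geq,\geq,-)$ are $(p,q)$ with $p=\alpha(e)-\beta(e)$ and $q=n-\alpha(e)$. (When $p=0$ the first list is empty.) *)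

theory Defs
  imports Main
begin

(* Inversion sequences are lists of naturals, 0-indexed: the paper's e_i is e ! (i-1),
   so the condition 0 <= e_i < i becomes e ! i <= i. *)
definition inv_seq :: "nat \<Rightarrow> nat list \<Rightarrow> bool" where
  "inv_seq n e \<longleftrightarrow> length e = n \<and> (\<forall>i<n. e ! i < i + 1)"

definition I_gg :: "nat \<Rightarrow> nat list set" where
  "I_gg n = {e. inv_seq n e \<and>
     \<not> (\<exists>i j k. i < j \<and> j < k \<and> k < n \<and> e ! i \<ge> e ! j \<and> e ! j \<ge> e ! k)}"

definition ltr_max :: "nat list \<Rightarrow> nat \<Rightarrow> bool" where
  "ltr_max e i \<longleftrightarrow> (\<forall>j<i. e ! j < e ! i)"

definition alpha :: "nat list \<Rightarrow> nat" where
  "alpha e = Max (set e)"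

definition beta :: "nat list \<Rightarrow> int" where
  "beta e = Max ({int (e ! i) | i. i < length e \<and> \<not> ltr_max e i} \<union> {-1})"

definition params :: "nat list \<Rightarrow> nat \<times> nat" where
  "params e = (nat (int (alpha e) - beta e), length e - alpha e)"

end

theory Submission
  imports Defs
begin

definition Sb :: "nat list \<Rightarrow> int set" where
  "Sb e = (\<lambda>i. int (e ! i)) ` {i. i < length e \<and> \<not> ltr_max e i}"

lemma Sb_eq: "{int (e ! i) | i. i < length e \<and> \<not> ltr_max e i} = Sb e"
  unfolding Sb_def by blast

lemma Sb_fin: "finite (Sb e)"
  unfolding Sb_def by simp

lemma beta_alt: "beta e = Max (Sb e \<union> {-1})"
  unfolding beta_def Sb_eq ..

lemma beta_ge: "beta e \<ge> -1"
  unfolding beta_alt by (simp add: Sb_fin)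

lemma le_beta_iff: "int b \<le> beta e \<longleftrightarrow> (\<exists>j<length e. \<not> ltr_max e j \<and> b \<le> e ! j)"
  unfolding beta_alt using Sb_fin[of e]
  by (auto simp: Max_ge_iff Sb_def)

lemma nltr_iff: "\<not> ltr_max e j \<longleftrightarrow> (\<exists>i<j. e ! j \<le> e ! i)"
  unfolding ltr_max_def by auto

lemma alpha_props:
  assumes "e \<in> I_gg n" "n \<ge> 1"
  shows "alpha e < n" "alpha e \<in> set e" "\<And>x. x \<in> set e \<Longrightarrow> x \<le> alpha e"
proof -
  have len: "length e = n" and lt: "\<forall>i<n. e ! i < i + 1"
    using assms(1) by (auto simp: I_gg_def inv_seq_def)
  have ne: "set e \<noteq> {}" using len assms(2) by auto
  show "alpha e \<in> set e" unfolding alpha_def using ne by simp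
  show "\<And>x. x \<in> set e \<Longrightarrow> x \<le> alpha e" unfolding alpha_def by simp
  have "\<forall>x\<in>set e. x < n" using lt len by (fastforce simp: in_set_conv_nth)
  then show "alpha e < n" using \<open>alpha e \<in> set e\<close> by blast
qed

lemma beta_le_alpha:
  assumes "e \<in> I_gg n" "n \<ge> 1"
  shows "beta e \<le> int (alpha e)"
proof -
  have "\<forall>x\<in>Sb e \<union> {-1}. x \<le> int (alpha e)"
    using alpha_props(3)[OF assms] by (auto simp: Sb_def)
  then show ?thesis unfolding beta_alt using Sb_fin[of e] by simp
qed

lemma alpha_snoc: "alpha (e @ [b]) = (if e = [] then b else max b (alpha e))"
  unfolding alpha_def by (auto simp: max_def)

lemma ltr_snoc: "i < length e \<Longrightarrow> ltr_max (e @ [b]) i = ltr_max e i"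
  unfolding ltr_max_def by (auto simp: nth_append)

lemma ltr_snoc_last:
  assumes "e \<in> I_gg n" "n \<ge> 1"
  shows "ltr_max (e @ [b]) (length e) \<longleftrightarrow> alpha e < b"
proof -
  have "ltr_max (e @ [b]) (length e) \<longleftrightarrow> (\<forall>x\<in>set e. x < b)"
    unfolding ltr_max_def by (fastforce simp: nth_append in_set_conv_nth)
  also have "\<dots> \<longleftrightarrow> alpha e < b"
    using alpha_props(2,3)[OF assms] by (meson le_less_trans)
  finally show ?thesis .
qed

lemma Sb_snoc:
  assumes "e \<in> I_gg n" "n \<ge> 1"
  shows "Sb (e @ [b]) = Sb e \<union> (if alpha e < b then {} else {int b})"
proof -
  have "{i. i < length (e@[b]) \<and> \<not> ltr_max (e@[b]) i} =
     {i. i < length e \<and> \<not> ltr_max e i} \<union> (if alpha e < b then {} else {length e})"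
    using ltr_snoc[of _ e b] ltr_snoc_last[OF assms, of b] by (auto simp: less_Suc_eq)
  then show ?thesis unfolding Sb_def by (auto simp: nth_append)
qed

lemma beta_snoc:
  assumes "e \<in> I_gg n" "n \<ge> 1" "beta e < int b"
  shows "beta (e @ [b]) = (if alpha e < b then beta e else int b)"
proof (cases "alpha e < b")
  case True
  then show ?thesis using Sb_snoc[OF assms(1,2), of b] by (simp add: beta_alt)
next
  case False
  have "beta (e @ [b]) = Max (insert (int b) (Sb e \<union> {-1}))"
    using Sb_snoc[OF assms(1,2), of b] False by (simp add: beta_alt insert_commute)
  also have "\<dots> = max (int b) (beta e)"
    using Sb_fin[of e] by (simp add: beta_alt)
  finally show ?thesis using False assms(3) by simp
qed

lemma mem_iff:
  assumes "e \<in> I_gg n" "n \<ge> 1"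
  shows "{f \<in> I_gg (n + 1). take n f = e} = {e @ [b] | b. beta e < int b \<and> b \<le> n}"
proof -
  have len: "length e = n" and lt: "\<forall>i<n. e ! i < i + 1"
    and av: "\<not> (\<exists>i j k. i < j \<and> j < k \<and> k < n \<and> e ! i \<ge> e ! j \<and> e ! j \<ge> e ! k)"
    using assms(1) by (auto simp: I_gg_def inv_seq_def)
  have key: "e @ [b] \<in> I_gg (n+1) \<longleftrightarrow> beta e < int b \<and> b \<le> n" for b
  proof -
    have inv: "inv_seq (n+1) (e @ [b]) \<longleftrightarrow> b \<le> n"
      using lt len by (auto simp: inv_seq_def nth_append less_Suc_eq)
    have pat: "(\<exists>i j k. i < j \<and> j < k \<and> k < n+1 \<and> (e@[b]) ! i \<ge> (e@[b]) ! j \<and> (e@[b]) ! j \<ge> (e@[b]) ! k)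
       \<longleftrightarrow> (\<exists>i j. i < j \<and> j < n \<and> e ! i \<ge> e ! j \<and> e ! j \<ge> b)" (is "?L \<longleftrightarrow> ?R")
    proof
      assume ?L
      then obtain i j k where h: "i < j" "j < k" "k < n+1" "(e@[b]) ! i \<ge> (e@[b]) ! j" "(e@[b]) ! j \<ge> (e@[b]) ! k"
        by blast
      show ?R
      proof (cases "k = n")
        case True
        then show ?thesis using h len by (auto simp: nth_append)
      next
        case False
        then have "k < n" using h by simp
        then show ?thesis using h av len by (auto simp: nth_append)
      qed
    next
      assume ?R
      then obtain i j where "i < j" "j < n" "e ! i \<ge> e ! j" "e ! j \<ge> b" by blast
      then show ?L using len
        by (intro exI[of _ i] exI[of _ j] exI[of _ n]) (auto simp: nth_append)
    qed
    have "?R \<longleftrightarrow> int b \<le> beta e"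
      unfolding le_beta_iff nltr_iff len by blast
    then show ?thesis using inv pat unfolding I_gg_def by auto
  qed
  show ?thesis
  proof (intro set_eqI iffI)
    fix f assume "f \<in> {f \<in> I_gg (n + 1). take n f = e}"
    then have f: "f \<in> I_gg (n+1)" "take n f = e" by auto
    then have "length f = n + 1" by (simp add: I_gg_def inv_seq_def)
    then have "drop n f = [f ! n]"
      by (simp add: Cons_nth_drop_Suc[symmetric])
    then have "f = take n f @ [f ! n]"
      by (metis append_take_drop_id)
    then have fe: "f = e @ [f ! n]" using f by simp
    then have "e @ [f ! n] \<in> I_gg (n+1)" using f(1) by simp
    then have "beta e < int (f ! n) \<and> f ! n \<le> n" using key[of "f ! n"] by simp
    then show "f \<in> {e @ [b] | b. beta e < int b \<and> b \<le> n}" using fe by blast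
  next
    fix f assume "f \<in> {e @ [b] | b. beta e < int b \<and> b \<le> n}"
    then obtain b where "f = e @ [b]" "beta e < int b" "b \<le> n" by blast
    then show "f \<in> {f \<in> I_gg (n + 1). take n f = e}" using key len by auto
  qed
qed

theorem lemma2p2:
  fixes n p q :: nat and e :: "nat list"
  assumes "n \<ge> 1" and "e \<in> I_gg n" and "params e = (p, q)"
  shows "card {f \<in> I_gg (n + 1). take n f = e} = p + q
    \<and> {f \<in> I_gg (n + 1). take n f = e} = {e @ [b] | b. beta e < int b \<and> b \<le> n}
    \<and> (\<forall>k::nat. 1 \<le> k \<and> k \<le> p + q \<longrightarrow>
          params (e @ [nat (beta e + int k)]) =
            (if k \<le> p then (p - k, q + 1) else (k, q + 1 - (k - p))))"
proof -
  have E: "e \<in> I_gg n" "n \<ge> 1" using assms by auto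
  have len: "length e = n" using assms(2) by (simp add: I_gg_def inv_seq_def)
  have ne: "e \<noteq> []" using len assms(1) by auto
  have a: "alpha e < n" by (rule alpha_props(1)[OF E])
  have bl: "beta e \<le> int (alpha e)" by (rule beta_le_alpha[OF E])
  have bg: "beta e \<ge> -1" by (rule beta_ge)
  have pq: "int p = int (alpha e) - beta e" "q = n - alpha e"
    using assms(3) bl by (auto simp: params_def len)
  have M: "{f \<in> I_gg (n + 1). take n f = e} = {e @ [b] | b. beta e < int b \<and> b \<le> n}"
    by (rule mem_iff[OF E])
  have s1: "{e @ [b] | b. beta e < int b \<and> b \<le> n} = (\<lambda>b. e @ [b]) ` {b. beta e < int b \<and> b \<le> n}"
    by blast
  have s2: "{b. beta e < int b \<and> b \<le> n} = {nat (beta e + 1)..n}" using bg by auto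
  have "{e @ [b] | b. beta e < int b \<and> b \<le> n} = (\<lambda>b. e @ [b]) ` {nat (beta e + 1)..n}"
    unfolding s1 s2 ..
  then have "card {e @ [b] | b. beta e < int b \<and> b \<le> n} = card {nat (beta e + 1)..n}"
    by (simp add: card_image inj_on_def)
  also have "\<dots> = p + q" using pq a bl bg by simp
  finally have C: "card {f \<in> I_gg (n + 1). take n f = e} = p + q" using M by simp
  have P: "params (e @ [nat (beta e + int k)]) =
            (if k \<le> p then (p - k, q + 1) else (k, q + 1 - (k - p)))"
    if k: "1 \<le> k" "k \<le> p + q" for k
  proof -
    define b where "b = nat (beta e + int k)"
    have bi: "int b = beta e + int k" using bg k unfolding b_def by simp
    have bb: "beta e < int b" using bi k by simp
    show ?thesis
    proof (cases "k \<le> p")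
      case True
      then have "\<not> alpha e < b" using bi pq by simp
      then show ?thesis using True beta_snoc[OF E bb] alpha_snoc[of e b] ne bi pq len a
        unfolding b_def[symmetric] params_def by auto
    next
      case False
      then have "alpha e < b" using bi pq by simp
      then show ?thesis using False beta_snoc[OF E bb] alpha_snoc[of e b] ne bi pq len k a
        unfolding b_def[symmetric] params_def by auto
    qed
  qed
  show ?thesis using C M P by blast
qed

end
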